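(* Let $b_x,b_y,u_x,u_y,K$ be positive constants with $u_y>u_x$ and $b_x\geq b_y$, let $h>0$, and consider the discrete system \[ X_{n+1}=\frac{X_n(1+hb_x)}{1+h\left(\frac{b_x}{K}X_n+\frac{b_x}{K}Y_n+u_x\right)},\qquad Y_{n+1}=\frac{Y_n(1+hb_y)}{1+h\left(\frac{b_y}{K}X_n+\frac{b_y}{K}Y_n+u_y\right)} . \] Let $\bar X=K(1-u_x/b_x)$ and $\bar Y=K(1-u_y/b_y)$. Then, for every $h>0$: (i) the system is locally asymptotically stable around $E_0^V=(0,0)$ if $b_x<u_x$ and $b_y<u_y$; (ii) the system is locally asymptotically stable around $E_1^V=(\bar X,0)$ if $b_x>u_x$ and $\frac{b_y}{u_y}<\frac{b_x}{u_x}$; (iii) the fixed point $E_2^V=(0,\bar Y)$ is always unstable.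
   Context: This is a nonstandard finite-difference discretization (step size $h$) of a host–parasite model with perfect vertical transmission and no horizontal transmission; $X,Y$ are uninfected and infected host densities, $b_x,b_y$ birth rates, $u_x,u_y$ death rates, $K$ carrying capacity. The paper assumes throughout that $u_y>u_x$ and $b_x\geq b_y$. A fixed point of the map is called (locally asymptotically) stable if both eigenvalues of the Jacobian of the map at the fixed point have modulus strictly less than $1$, and unstable otherwise. *)

theory Defs
  imports "HOL-Analysis.Analysis"
begin

text \<open>The nonstandard finite-difference host-parasite map, on the plane real^2
  (component 1 = X, uninfected hosts; component 2 = Y, infected hosts).\<close>
definition hp_map :: "real \<Rightarrow> real \<Rightarrow> real \<Rightarrow> real \<Rightarrow> real \<Rightarrow> real \<Rightarrow> real^2 \<Rightarrow> real^2" where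
  "hp_map b_x b_y u_x u_y K h v =
     vector [ v$1 * (1 + h*b_x) / (1 + h*(b_x/K * v$1 + b_x/K * v$2 + u_x)),
              v$2 * (1 + h*b_y) / (1 + h*(b_y/K * v$1 + b_y/K * v$2 + u_y)) ]"

definition jacobian :: "(real^'n \<Rightarrow> real^'m) \<Rightarrow> real^'n \<Rightarrow> real^'n^'m" where
  "jacobian f p = matrix (frechet_derivative f (at p))"

definition eigenvalue :: "real^'n^'n \<Rightarrow> complex \<Rightarrow> bool" where
  "eigenvalue A lam \<longleftrightarrow> det ((\<chi> i j. complex_of_real (A $ i $ j)) - mat lam) = 0"

definition loc_stable :: "(real^'n \<Rightarrow> real^'n) \<Rightarrow> real^'n \<Rightarrow> bool" where
  "loc_stable f p \<longleftrightarrow> f p = p \<and> f differentiable (at p) \<and>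
     (\<forall>lam. eigenvalue (jacobian f p) lam \<longrightarrow> cmod lam < 1)"

text \<open>Unstable fixed point (the paper: "unstable otherwise"): a fixed point which is
  not locally asymptotically stable.\<close>
definition loc_unstable :: "(real^'n \<Rightarrow> real^'n) \<Rightarrow> real^'n \<Rightarrow> bool" where
  "loc_unstable f p \<longleftrightarrow> f p = p \<and> \<not> loc_stable f p"

end

theory Submission
  imports Defs
begin

lemma hd_nth[derivative_intros]: "((\<lambda>v::real^2. v $ i) has_derivative (\<lambda>v. v $ i)) F"
  by (rule bounded_linear_imp_has_derivative) (rule bounded_linear_vec_nth)

lemma hp_eq: "hp_map bx by ux uy K h = (\<lambda>v. (v$1 * (1 + h*bx) / (1 + h*(bx/K * v$1 + bx/K * v$2 + ux))) *\<^sub>R axis 1 1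
   + (v$2 * (1 + h*by) / (1 + h*(by/K * v$1 + by/K * v$2 + uy))) *\<^sub>R axis 2 1)"
  by (auto simp: hp_map_def vec_eq_iff forall_2 axis_def fun_eq_iff)

definition JD :: "real \<Rightarrow> real \<Rightarrow> real \<Rightarrow> real \<Rightarrow> real \<Rightarrow> real \<Rightarrow> real^2 \<Rightarrow> real^2 \<Rightarrow> real^2" where "JD bx by ux uy K h p = (let d1 = 1 + h*(bx/K * p$1 + bx/K * p$2 + ux);
   d2 = 1 + h*(by/K * p$1 + by/K * p$2 + uy) in
   (\<lambda>v::real^2. ((1+h*bx)/d1 * v$1 - p$1*(1+h*bx)*h*bx/K/d1^2 * (v$1 + v$2)) *\<^sub>R axis 1 1
     + ((1+h*by)/d2 * v$2 - p$2*(1+h*by)*h*by/K/d2^2 * (v$1 + v$2)) *\<^sub>R axis 2 1))"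

lemma aux_eq: "(d::real) \<noteq> 0 \<Longrightarrow> K \<noteq> 0 \<Longrightarrow> (x * A * d - q * A * (0 + h * (b / K * y1 + b / K * y2 + 0))) / (d * d)
   = A / d * x - q * A * h * b / K / d\<^sup>2 * (y1 + y2)"
  apply (simp add: divide_simps power2_eq_square)
  apply (simp add: algebra_simps)
  done

lemma aux2: "(A::real) \<noteq> 0 \<Longrightarrow> K \<noteq> 0 \<Longrightarrow> A/A - X*A*h*b/K/A^2 = 1 - (b/K*X)*h/A"
  by (simp add: field_simps power2_eq_square)

lemma g_deriv:
  assumes "K \<noteq> 0" "1 + h*(b/K * p$1 + b/K * p$2 + u) \<noteq> 0"
  shows "((\<lambda>v::real^2. v$k * (1 + h*b) / (1 + h*(b/K * v$1 + b/K * v$2 + u))) has_derivative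
    (\<lambda>v. (1+h*b)/(1 + h*(b/K * p$1 + b/K * p$2 + u)) * v$k - p$k*(1+h*b)*h*b/K/(1 + h*(b/K * p$1 + b/K * p$2 + u))^2 * (v$1 + v$2))) (at p)"
  apply (rule has_derivative_eq_rhs)
   apply (rule has_derivative_divide')
  apply (rule derivative_intros hd_nth)+
  using assms apply simp
  apply (rule ext)
  apply (rule aux_eq)
  using assms by auto

lemma hp_deriv:
  assumes "K \<noteq> 0" "1 + h*(bx/K * p$1 + bx/K * p$2 + ux) \<noteq> 0" "1 + h*(by/K * p$1 + by/K * p$2 + uy) \<noteq> 0"
  shows "(hp_map bx by ux uy K h has_derivative JD bx by ux uy K h p) (at p)"
  unfolding hp_eq JD_def Let_def
  by (intro has_derivative_add has_derivative_scaleR_left g_deriv assms)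

lemma JD_mat: "matrix (JD bx by ux uy K h p) $ (1::2) $ (1::2) = (1+h*bx)/(1 + h*(bx/K * p$1 + bx/K * p$2 + ux)) - p$1*(1+h*bx)*h*bx/K/(1 + h*(bx/K * p$1 + bx/K * p$2 + ux))^2"
  "matrix (JD bx by ux uy K h p) $ (1::2) $ (2::2) = - p$1*(1+h*bx)*h*bx/K/(1 + h*(bx/K * p$1 + bx/K * p$2 + ux))^2"
  "matrix (JD bx by ux uy K h p) $ (2::2) $ (1::2) = - p$2*(1+h*by)*h*by/K/(1 + h*(by/K * p$1 + by/K * p$2 + uy))^2"
  "matrix (JD bx by ux uy K h p) $ (2::2) $ (2::2) = (1+h*by)/(1 + h*(by/K * p$1 + by/K * p$2 + uy)) - p$2*(1+h*by)*h*by/K/(1 + h*(by/K * p$1 + by/K * p$2 + uy))^2"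
  by (simp_all add: matrix_def JD_def Let_def axis_def)

lemma eig2: "eigenvalue (A::real^2^2) lam \<longleftrightarrow> (complex_of_real (A$1$1) - lam) * (complex_of_real (A$2$2) - lam) = complex_of_real (A$1$2 * A$2$1)"
  by (simp add: eigenvalue_def det_2 mat_def)
lemma eig_tri: "A$1$2 = 0 \<or> A$2$1 = 0 \<Longrightarrow> eigenvalue (A::real^2^2) lam \<longleftrightarrow> lam = complex_of_real (A$1$1) \<or> lam = complex_of_real (A$2$2)"
  unfolding eig2 by auto

lemma stable_tri:
  assumes "f p = p" "(f has_derivative F) (at p)" "matrix F $1$2 = 0 \<or> matrix F $2$1 = 0"
    "\<bar>matrix F $1$1\<bar> < 1" "\<bar>matrix F $2$2\<bar> < 1"
  shows "loc_stable f (p::real^2)"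
proof -
  have j: "jacobian f p = matrix F" unfolding jacobian_def using frechet_derivative_at[OF assms(2)] by simp
  show ?thesis unfolding loc_stable_def j using assms eig_tri[OF assms(3)]
    by (auto simp: differentiable_def)
qed

lemma not_stable_tri:
  assumes "(f has_derivative F) (at p)" "matrix F $1$2 = 0 \<or> matrix F $2$1 = 0"
    "\<bar>matrix F $1$1\<bar> \<ge> 1 \<or> \<bar>matrix F $2$2\<bar> \<ge> 1"
  shows "\<not> loc_stable f (p::real^2)"
proof -
  have j: "jacobian f p = matrix F" unfolding jacobian_def using frechet_derivative_at[OF assms(1)] by simp
  show ?thesis unfolding loc_stable_def j using assms eig_tri[OF assms(2)]
    by (metis norm_of_real not_less)
qed

theorem theorem6:
  fixes b_x b_y u_x u_y K h :: real
  assumes pos: "b_x > 0" "b_y > 0" "u_x > 0" "u_y > 0" "K > 0"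
    and "u_y > u_x" and "b_x \<ge> b_y" and "h > 0"
  shows "(b_x < u_x \<and> b_y < u_y \<longrightarrow> loc_stable (hp_map b_x b_y u_x u_y K h) (vector [0, 0]))
       \<and> (b_x > u_x \<and> b_y / u_y < b_x / u_x \<longrightarrow>
            loc_stable (hp_map b_x b_y u_x u_y K h) (vector [K * (1 - u_x / b_x), 0]))
       \<and> loc_unstable (hp_map b_x b_y u_x u_y K h) (vector [0, K * (1 - u_y / b_y)])"
proof (intro conjI impI)
  let ?f = "hp_map b_x b_y u_x u_y K h"
  have hp: "h*u_x > 0" "h*u_y > 0" "h*b_x > 0" "h*b_y > 0" using pos assms(8) by simp_all
  note P = pos assms(6-8) hp
  have K0: "K \<noteq> 0" using P by simp
  {
    assume a: "b_x < u_x \<and> b_y < u_y"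
    let ?p = "vector [0, 0] :: real^2"
    have fp: "?f ?p = ?p" by (simp add: hp_map_def vec_eq_iff forall_2)
    have d1: "1 + h*(b_x/K * ?p$1 + b_x/K * ?p$2 + u_x) = 1 + h*u_x" by simp
    have d2: "1 + h*(b_y/K * ?p$1 + b_y/K * ?p$2 + u_y) = 1 + h*u_y" by simp
    have der: "(?f has_derivative JD b_x b_y u_x u_y K h ?p) (at ?p)"
      apply (rule hp_deriv) using K0 hp by simp_all
    have m11: "matrix (JD b_x b_y u_x u_y K h ?p) $1$1 = (1+h*b_x)/(1+h*u_x)" by (simp add: JD_mat)
    have m22: "matrix (JD b_x b_y u_x u_y K h ?p) $2$2 = (1+h*b_y)/(1+h*u_y)" by (simp add: JD_mat)
    have m12: "matrix (JD b_x b_y u_x u_y K h ?p) $1$2 = 0" by (simp add: JD_mat)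
    have "\<bar>(1+h*b_x)/(1+h*u_x)\<bar> < 1" using a P by (simp add: abs_less_iff divide_simps add_pos_pos)
    moreover have "\<bar>(1+h*b_y)/(1+h*u_y)\<bar> < 1" using a P by (simp add: abs_less_iff divide_simps add_pos_pos)
    ultimately show "loc_stable ?f ?p"
      by (intro stable_tri[OF fp der]) (simp_all add: m11 m22 m12)
  }
  {
    assume a: "b_x > u_x \<and> b_y / u_y < b_x / u_x"
    let ?X = "K * (1 - u_x / b_x)"
    let ?p = "vector [?X, 0] :: real^2"
    have e1: "b_x / K * ?X = b_x - u_x" using P by (simp add: field_simps)
    have e2: "b_y / K * ?X = b_y - b_y * u_x / b_x" using P by (simp add: field_simps)
    have D1: "1 + h*(b_x/K * ?p$1 + b_x/K * ?p$2 + u_x) = 1 + h*b_x" using e1 by simp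
    have D2: "1 + h*(b_y/K * ?p$1 + b_y/K * ?p$2 + u_y) = 1 + h*(b_y - b_y * u_x / b_x + u_y)" using e2 by simp
    have pos2: "b_y - b_y * u_x / b_x > 0" using a P by (simp add: field_simps)
    have D2p: "1 + h*(b_y - b_y * u_x / b_x + u_y) > 0" using pos2 P by (simp add: add_pos_pos)
    have e3: "b_x * (1 - u_x / b_x) + u_x = b_x" using P by (simp add: field_simps)
    have e4: "1 + h*b_x \<noteq> 0" using hp by linarith
    have fp: "?f ?p = ?p" using e4
      by (simp add: hp_map_def vec_eq_iff forall_2 e3)
    have der: "(?f has_derivative JD b_x b_y u_x u_y K h ?p) (at ?p)"
      apply (rule hp_deriv) using K0 apply simp
      using P apply (simp only: D1; simp add: add_pos_pos)
      using D2p by (simp only: D2; simp)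
    have m11: "matrix (JD b_x b_y u_x u_y K h ?p) $1$1 = (1+h*u_x)/(1+h*b_x)"
    proof -
      have "matrix (JD b_x b_y u_x u_y K h ?p) $1$1 = (1+h*b_x)/(1+h*b_x) - ?X*(1+h*b_x)*h*b_x/K/(1+h*b_x)^2"
        by (simp only: JD_mat D1) simp
      also have "\<dots> = 1 - (b_x/K*?X)*h/(1+h*b_x)" by (rule aux2[OF e4 K0])
      also have "\<dots> = (1+h*u_x)/(1+h*b_x)" unfolding e1 using e4
        by (simp add: field_simps)
      finally show ?thesis .
    qed
    have m22: "matrix (JD b_x b_y u_x u_y K h ?p) $2$2 = (1+h*b_y)/(1 + h*(b_y - b_y * u_x / b_x + u_y))"
      by (simp only: JD_mat D2) simp
    have m21: "matrix (JD b_x b_y u_x u_y K h ?p) $2$1 = 0" by (simp add: JD_mat)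
    have "\<bar>(1+h*u_x)/(1+h*b_x)\<bar> < 1" using a P by (simp add: abs_less_iff divide_simps add_pos_pos)
    moreover have "b_y * u_x / b_x < u_y" using a P by (simp add: field_simps)
    then have "h * (u_y - b_y * u_x / b_x) > 0" using P by simp
    then have lt: "1+h*b_y < 1 + h*(b_y - b_y * u_x / b_x + u_y)" by (simp add: algebra_simps)
    have "0 < 1+h*b_y" using hp by linarith
    then have "\<bar>(1+h*b_y)/(1 + h*(b_y - b_y * u_x / b_x + u_y))\<bar> < 1" using lt
      by (simp add: abs_less_iff divide_simps)
    ultimately show "loc_stable ?f ?p"
      by (intro stable_tri[OF fp der]) (simp_all add: m11 m22 m21)
  }
  show "loc_unstable ?f (vector [0, K * (1 - u_y / b_y)])"
  proof -
    define Y where "Y = K * (1 - u_y / b_y)"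
    let ?p = "vector [0, Y] :: real^2"
    have ey: "b_y / K * Y = b_y - u_y" using P unfolding Y_def by (simp add: field_simps)
    have ey1: "1 + h*(b_y/K * 0 + b_y/K * Y + u_y) = 1 + h*b_y" using ey by simp
    have hb: "1 + h*b_y \<noteq> 0" using hp by linarith
    have f2: "?f ?p $ 2 = Y*(1+h*b_y)/(1 + h*(b_y/K * 0 + b_y/K * Y + u_y))" by (simp add: hp_map_def)
    also have "\<dots> = Y" unfolding ey1 using hb by simp
    finally have f2: "?f ?p $ 2 = Y" .
    have f1: "?f ?p $ 1 = 0" by (simp add: hp_map_def)
    have fp: "?f ?p = ?p" using f1 f2 by (simp add: vec_eq_iff forall_2)
    have "\<not> loc_stable ?f ?p"
    proof (cases "1 + h*(b_x/K * Y + u_x) = 0")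
      case True
      show ?thesis
      proof
        assume st: "loc_stable ?f ?p"
        then have "?f differentiable (at ?p)" unfolding loc_stable_def by simp
        then have cont: "isCont ?f ?p" by (rule differentiable_imp_continuous_within)
        let ?g = "\<lambda>t::real. ?p + t *\<^sub>R axis 1 1"
        have "(?g \<longlongrightarrow> ?p + 0 *\<^sub>R axis 1 1) (at 0)" by (intro tendsto_intros)
        then have "(?g \<longlongrightarrow> ?p) (at 0)" by simp
        then have "((\<lambda>t. ?f (?g t)) \<longlongrightarrow> ?f ?p) (at 0)" by (rule isCont_tendsto_compose[OF cont])
        then have L: "((\<lambda>t. ?f (?g t) $ 1) \<longlongrightarrow> 0) (at 0)" using f1 by (metis tendsto_vec_nth)
        define c where "c = K*(1+h*b_x)/(h*b_x)"
        have comp: "?f (?g t) $ 1 = c" if t0: "t \<noteq> 0" for t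
        proof -
          have "?f (?g t) $ 1 = t*(1+h*b_x)/(1 + h*(b_x/K*t + b_x/K*Y + u_x))" by (simp add: hp_map_def axis_def)
          also have "1 + h*(b_x/K*t + b_x/K*Y + u_x) = h*b_x/K*t" using True by (simp add: algebra_simps)
          also have "t*(1+h*b_x)/(h*b_x/K*t) = c" unfolding c_def using t0 K0 P by (simp add: field_simps)
          finally show ?thesis .
        qed
        have "((\<lambda>t. c) \<longlongrightarrow> 0) (at (0::real))"
          apply (rule tendsto_cong[THEN iffD1, OF _ L])
          using comp by (auto simp: eventually_at intro!: exI[of _ 1])
        then have "c = 0" by (rule LIM_const_eq)
        moreover have "c > 0" unfolding c_def using P hp by (simp add: add_pos_pos)
        ultimately show False by simp
      qed
    next
      case False
      have D2: "1 + h*(b_y/K * ?p$1 + b_y/K * ?p$2 + u_y) = 1 + h*b_y" using ey by simp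
      have D1: "1 + h*(b_x/K * ?p$1 + b_x/K * ?p$2 + u_x) = 1 + h*(b_x/K * Y + u_x)" by simp
      have der: "(?f has_derivative JD b_x b_y u_x u_y K h ?p) (at ?p)"
        apply (rule hp_deriv)
          apply (rule K0)
         apply (subst D1, rule False)
        apply (subst D2, rule hb)
        done
      have m12: "matrix (JD b_x b_y u_x u_y K h ?p) $1$2 = 0" by (simp add: JD_mat)
      have m11: "matrix (JD b_x b_y u_x u_y K h ?p) $1$1 = (1+h*b_x)/(1 + h*(b_x/K * Y + u_x))"
        by (simp only: JD_mat D1) simp
      have m22: "matrix (JD b_x b_y u_x u_y K h ?p) $2$2 = (1+h*u_y)/(1+h*b_y)"
      proof -
        have "matrix (JD b_x b_y u_x u_y K h ?p) $2$2 = (1+h*b_y)/(1+h*b_y) - Y*(1+h*b_y)*h*b_y/K/(1+h*b_y)^2"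
          by (simp only: JD_mat D2) simp
        also have "\<dots> = 1 - (b_y/K*Y)*h/(1+h*b_y)" by (rule aux2[OF hb K0])
        also have "\<dots> = (1+h*u_y)/(1+h*b_y)" unfolding ey using hb
          by (simp add: field_simps)
        finally show ?thesis .
      qed
      show ?thesis
      proof (cases "b_y \<le> u_y")
        case True
        have "0 < 1+h*b_y" using hp by linarith
        moreover have "h*b_y \<le> h*u_y" using True P by simp
        ultimately have "\<bar>(1+h*u_y)/(1+h*b_y)\<bar> \<ge> 1" by (simp add: divide_simps)
        then show ?thesis by (intro not_stable_tri[OF der]) (simp_all add: m12 m22)
      next
        case False
        have ex: "b_x/K * Y = b_x - b_x*u_y/b_y" using P unfolding Y_def by (simp add: field_simps)
        have q1: "b_x*u_y/b_y \<ge> u_y" using P by (simp add: field_simps mult_right_mono)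
        have q2: "b_x*u_y/b_y < b_x" using P False by (simp add: field_simps)
        have "h*(b_x*u_y/b_y) < h * b_x" using q2 P by (intro mult_strict_left_mono) simp_all
        moreover have "h*(b_x*u_y/b_y) > h * u_x" using q1 P by (intro mult_strict_left_mono) simp_all
        ultimately have Dlt: "0 < 1 + h*(b_x/K * Y + u_x)" "1 + h*(b_x/K * Y + u_x) < 1 + h*b_x"
          unfolding ex using hp(1) by (simp_all add: algebra_simps)
        then have "\<bar>(1+h*b_x)/(1 + h*(b_x/K * Y + u_x))\<bar> \<ge> 1" by (simp add: divide_simps)
        then show ?thesis by (intro not_stable_tri[OF der]) (simp_all add: m12 m11)
      qed
    qed
    then show ?thesis unfolding loc_unstable_def Y_def[symmetric] using fp by simp
  qed
qed

end
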